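(* There exists a constant $M$ such that for every $n \ge 1$ and every non-zero polynomial $f(z) = \sum_{i=0}^n a_i z^i$ with $a_i \in \{-1,0,1\}$ for all $0\le i\le n$, the number of $z\in\mathbb{C}$ with $f(z) = 0$ and $|z|\ge\frac{3}{2}$ is at most $M$. *)

theory Defs
  imports "HOL-Analysis.Analysis"
begin

end

theory Submission
  imports Defs "HOL-Complex_Analysis.Complex_Analysis" "HOL-Computational_Algebra.Polynomial"
begin

lemma factor_roots:
  fixes g :: "complex poly"
  assumes "finite W" "\<forall>u\<in>W. poly g u = 0"
  shows "\<exists>h. g = (\<Prod>u\<in>W. [:-u,1:]) * h"
  using assms
proof (induction W arbitrary: g rule: finite_induct)
  case empty then show ?case by auto
next
  case (insert u W)
  then have "[:-u,1:] dvd g" using poly_eq_0_iff_dvd by blast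
  then obtain g1 where g1: "g = [:-u,1:] * g1" by (auto elim: dvdE)
  have "\<forall>v\<in>W. poly g1 v = 0"
  proof
    fix v assume v: "v \<in> W"
    then have "v \<noteq> u" using insert by auto
    moreover have "poly g v = 0" using insert v by auto
    ultimately show "poly g1 v = 0" using g1 by simp
  qed
  then obtain h where h: "g1 = (\<Prod>u\<in>W. [:-u,1:]) * h" using insert.IH by blast
  have "g = ([:-u,1:] * (\<Prod>u\<in>W. [:-u,1:])) * h" by (simp only: g1 h mult.assoc)
  also have "[:-u,1:] * (\<Prod>u\<in>W. [:-u,1:]) = (\<Prod>u\<in>insert u W. [:-u,1:])"
    using insert.hyps by simp
  finally show ?case by blast
qed

lemma poly_holo: "(\<lambda>w. poly (h::complex poly) w) holomorphic_on S"
  by (simp add: poly_altdef) (intro holomorphic_intros)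

lemma disk_roots:
  fixes g :: "complex poly"
  assumes coef: "\<And>i. norm (coeff g i) \<le> 1" and c0: "norm (coeff g 0) \<ge> 1"
   and W: "finite W" "\<And>w. w\<in>W \<Longrightarrow> poly g w = 0 \<and> norm w \<le> 2/3"
  shows "card W \<le> 8"
proof -
  define R :: real where "R = 5/6"
  obtain h where h: "g = (\<Prod>u\<in>W. [:-u,1:]) * h" using factor_roots W by blast
  define F where "F w = poly h w * (\<Prod>u\<in>W. (of_real (R^2) - cnj u * w) / of_real R)" for w
  have bound: "norm (poly g w) \<le> 6" if "norm w = R" for w
  proof -
    have "norm (poly g w) = norm (\<Sum>i\<le>degree g. coeff g i * w^i)" by (simp add: poly_altdef)
    also have "\<dots> \<le> (\<Sum>i\<le>degree g. R^i)"
    proof (rule sum_norm_le)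
      fix i
      have "norm (coeff g i) * R^i \<le> 1 * R^i"
        using coef[of i] by (intro mult_right_mono) (auto simp: R_def)
      then show "norm (coeff g i * w^i) \<le> R^i" using that by (simp add: norm_mult norm_power)
    qed
    also have "\<dots> \<le> (\<Sum>i. R^i)"
      by (rule sum_le_suminf) (auto simp: R_def intro: summable_geometric)
    also have "\<dots> = 6" by (subst suminf_geometric) (auto simp: R_def)
    finally show ?thesis .
  qed
  have Fmod: "norm (F w) = norm (poly g w)" if "norm w = R" for w
  proof -
    have "norm ((of_real (R^2) - cnj u * w) / of_real R) = norm (w - u)" for u
    proof -
      have "of_real (R^2) = w * cnj w" using that complex_norm_square[of w] by simp
      then have "of_real (R^2) - cnj u * w = w * cnj (w - u)" by (simp add: algebra_simps)
      then have e1: "norm (of_real (R^2) - cnj u * w) = norm w * norm (w - u)"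
        by (simp only: norm_mult complex_mod_cnj)
      have e2: "norm (x / of_real R) = norm x / R" for x :: complex
        by (simp add: norm_divide R_def)
      have "R > 0" by (simp add: R_def)
      then show ?thesis unfolding e2 e1 that by simp
    qed
    note key = this
    have "norm (F w) = norm (poly h w) * (\<Prod>u\<in>W. norm ((of_real (R^2) - cnj u * w) / of_real R))"
      by (simp only: F_def norm_mult prod_norm)
    also have "\<dots> = norm (poly h w) * (\<Prod>u\<in>W. norm (w - u))"
      by (simp only: key)
    finally have "norm (F w) = norm (poly h w) * (\<Prod>u\<in>W. norm (w - u))" .
    moreover have "poly g w = poly h w * (\<Prod>u\<in>W. w - u)"
      by (simp add: h poly_prod)
    ultimately show ?thesis by (simp add: norm_mult prod_norm)
  qed
  have "norm (F 0) \<le> 6"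
  proof (rule maximum_modulus_frontier[where S = "cball 0 R" and f = F])
    have "F holomorphic_on UNIV" unfolding F_def
      by (intro holomorphic_intros poly_holo) (auto simp: R_def)
    note hol = this
    show "F holomorphic_on interior (cball 0 R)"
      by (rule holomorphic_on_subset[OF hol]) auto
    show "continuous_on (closure (cball 0 R)) F"
      by (rule holomorphic_on_imp_continuous_on, rule holomorphic_on_subset[OF hol]) auto
    show "bounded (cball (0::complex) R)" by simp
    show "norm (F z) \<le> 6" if "z \<in> frontier (cball 0 R)" for z
      using that Fmod bound by (simp add: R_def)
    show "0 \<in> cball (0::complex) R" by (simp add: R_def)
  qed
  moreover have "F 0 = poly h 0 * of_real R ^ card W"
    by (simp add: F_def power2_eq_square R_def)
  ultimately have A: "norm (poly h 0) * R ^ card W \<le> 6"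
    by (simp add: norm_mult norm_power R_def)
  have "poly g 0 = poly h 0 * (\<Prod>u\<in>W. -u)" by (simp add: h poly_prod)
  have pn: "norm (\<Prod>u\<in>W. -u) = (\<Prod>u\<in>W. norm u)"
    by (simp only: prod_norm[symmetric] norm_minus_cancel)
  have "1 \<le> norm (poly g 0)" using c0 by (simp add: poly_0_coeff_0)
  also have "\<dots> = norm (poly h 0) * (\<Prod>u\<in>W. norm u)"
    using \<open>poly g 0 = _\<close> pn by (simp only: norm_mult)
  also have "\<dots> \<le> norm (poly h 0) * (2/3) ^ card W"
    using W by (intro mult_left_mono) (auto intro!: prod_mono order_trans[OF prod_mono[of W norm "\<lambda>_. 2/3"]])
  finally have B: "1 \<le> norm (poly h 0) * (2/3) ^ card W" .
  have "(5/4::real) ^ card W \<le> (5/4) ^ card W * (norm (poly h 0) * (2/3) ^ card W)"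
    using B by simp
  also have "\<dots> = norm (poly h 0) * R ^ card W"
    by (simp add: R_def power_mult_distrib[symmetric])
  finally have C: "(5/4::real) ^ card W \<le> 6" using A by simp
  show ?thesis
  proof (rule ccontr)
    assume "\<not> card W \<le> 8"
    then have "(5/4::real) ^ 9 \<le> (5/4) ^ card W" by (intro power_increasing) auto
    with C have "(5/4::real)^9 \<le> 6" by linarith
    then show False by (simp add: power_numeral_reduce)
  qed
qed

theorem claim2p1:
  shows "\<exists>M::nat. \<forall>(n::nat) (a::nat \<Rightarrow> int).
           n \<ge> 1 \<longrightarrow> (\<forall>i\<le>n. a i \<in> {-1, 0, 1}) \<longrightarrow> (\<exists>i\<le>n. a i \<noteq> 0) \<longrightarrow>
           card {z::complex. (\<Sum>i=0..n. of_int (a i) * z ^ i) = 0 \<and> norm z \<ge> 3/2} \<le> M"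
proof (intro exI[of _ 8] allI impI)
  fix n :: nat and a :: "nat \<Rightarrow> int"
  assume n: "n \<ge> 1" and a: "\<forall>i\<le>n. a i \<in> {-1, 0, 1}" and nz: "\<exists>i\<le>n. a i \<noteq> 0"
  define p :: "complex poly" where "p = (\<Sum>i=0..n. monom (of_int (a i)) i)"
  have cp: "coeff p i = (if i \<le> n then of_int (a i) else 0)" for i
    by (simp add: p_def coeff_sum coeff_monom)
  have pp: "poly p z = (\<Sum>i=0..n. of_int (a i) * z ^ i)" for z
    by (simp add: p_def poly_sum poly_monom)
  have "p \<noteq> 0" using nz cp by (metis coeff_0 of_int_eq_0_iff)
  define g where "g = reflect_poly p"
  have g0: "g \<noteq> 0" using \<open>p \<noteq> 0\<close> by (simp add: g_def)
  have cp1: "norm (coeff p i) \<le> 1" for i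
    using a[rule_format, of i] by (auto simp: cp)
  have coef: "norm (coeff g i) \<le> 1" for i
    using cp1 by (simp add: g_def coeff_reflect_poly)
  have "lead_coeff p \<noteq> 0" using \<open>p \<noteq> 0\<close> by simp
  then have "norm (lead_coeff p) = 1"
    using a[rule_format, of "degree p"] by (auto simp: cp split: if_splits)
  then have c0: "norm (coeff g 0) \<ge> 1" by (simp add: g_def)
  define W where "W = {w. poly g w = 0 \<and> norm w \<le> 2/3}"
  have fW: "finite W" unfolding W_def using poly_roots_finite[OF g0] by simp
  have cW: "card W \<le> 8" using disk_roots[OF coef c0 fW] by (auto simp: W_def)
  have sub: "{z::complex. (\<Sum>i=0..n. of_int (a i) * z ^ i) = 0 \<and> norm z \<ge> 3/2} \<subseteq> inverse ` W"
  proof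
    fix z :: complex assume z: "z \<in> {z::complex. (\<Sum>i=0..n. of_int (a i) * z ^ i) = 0 \<and> norm z \<ge> 3/2}"
    then have z0: "z \<noteq> 0" by auto
    have "poly g (inverse z) = 0"
      using z z0 by (simp add: g_def poly_reflect_poly_nz pp)
    moreover have "norm (inverse z) \<le> 2/3"
    proof -
      have "norm (inverse z) = 1 / norm z" by (simp add: norm_inverse divide_inverse)
      also have "\<dots> \<le> 1 / (3/2)" using z by (intro divide_left_mono) auto
      finally show ?thesis by simp
    qed
    ultimately have "inverse z \<in> W" by (simp add: W_def)
    then show "z \<in> inverse ` W" by (metis image_eqI inverse_inverse_eq)
  qed
  have "card {z::complex. (\<Sum>i=0..n. of_int (a i) * z ^ i) = 0 \<and> norm z \<ge> 3/2} \<le> card (inverse ` W)"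
    by (rule card_mono[OF _ sub]) (use fW in simp)
  also have "\<dots> \<le> card W" by (rule card_image_le[OF fW])
  finally show "card {z::complex. (\<Sum>i=0..n. of_int (a i) * z ^ i) = 0 \<and> norm z \<ge> 3/2} \<le> 8"
    using cW by simp
qed

end
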